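(* Let $G$ be a finite group and $p$ a prime dividing $|G|$. If $\mathcal{O}_p(G)\neq1$, then the finite spaces $\mathcal{S}_p(G)'/G$ and $\mathcal{B}_p(G)'/G$ are contractible.
   Context: $\mathcal{O}_p(G)$ is the largest normal $p$-subgroup of $G$. $\mathcal{S}_p(G)$ is the poset of non-trivial $p$-subgroups of $G$; $\mathcal{B}_p(G)=\{P\in\mathcal{S}_p(G):P=\mathcal{O}_p(N_G(P))\}$. $G$ acts by conjugation. For a poset $X$, $X'$ is the poset of non-empty chains ordered by inclusion with componentwise $G$-action, and $X'/G$ is the orbit poset ($\overline{c}\le\overline{d}$ iff some representatives satisfy $c_1\subseteq d_1$). Finite posets are finite $T_0$ spaces whose open sets are the down-sets. *)

theory Defs
  imports "HOL-Analysis.Analysis" "HOL-Algebra.Group_Action"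
begin

definition p_subgroup :: "('a, 'b) monoid_scheme \<Rightarrow> nat \<Rightarrow> 'a set \<Rightarrow> bool" where
  "p_subgroup G p P \<longleftrightarrow> subgroup P G \<and> (\<exists>n. card P = p ^ n)"

definition Op :: "('a, 'b) monoid_scheme \<Rightarrow> nat \<Rightarrow> 'a set" where
  "Op G p = (THE Q. p_subgroup G p Q \<and> Q \<lhd> G \<and>
                 (\<forall>Q'. p_subgroup G p Q' \<and> Q' \<lhd> G \<longrightarrow> Q' \<subseteq> Q))"

definition Sp :: "('a, 'b) monoid_scheme \<Rightarrow> nat \<Rightarrow> 'a set set" where
  "Sp G p = {P. p_subgroup G p P \<and> P \<noteq> {\<one>\<^bsub>G\<^esub>}}"

definition Bp :: "('a, 'b) monoid_scheme \<Rightarrow> nat \<Rightarrow> 'a set set" where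
  "Bp G p = {P \<in> Sp G p. P = Op (G\<lparr>carrier := normalizer G P\<rparr>) p}"

definition conj_set :: "('a, 'b) monoid_scheme \<Rightarrow> 'a \<Rightarrow> 'a set \<Rightarrow> 'a set" where
  "conj_set G g P = g <#\<^bsub>G\<^esub> P #>\<^bsub>G\<^esub> inv\<^bsub>G\<^esub> g"

definition chains_poset :: "'c set set \<Rightarrow> 'c set set set" where
  "chains_poset X = {c. c \<noteq> {} \<and> c \<subseteq> X \<and> (\<forall>a\<in>c. \<forall>b\<in>c. a \<subseteq> b \<or> b \<subseteq> a)}"

definition chain_action :: "('a, 'b) monoid_scheme \<Rightarrow> 'a \<Rightarrow> 'a set set \<Rightarrow> 'a set set" where
  "chain_action G g c = conj_set G g ` c"

definition orbit_poset :: "('a, 'b) monoid_scheme \<Rightarrow> 'a set set \<Rightarrow> 'a set set set set" where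
  "orbit_poset G X = orbits G (chains_poset X) (chain_action G)"

definition orbit_le :: "'a set set set \<Rightarrow> 'a set set set \<Rightarrow> bool" where
  "orbit_le O1 O2 \<longleftrightarrow> (\<exists>c\<in>O1. \<exists>d\<in>O2. c \<subseteq> d)"

(* finite poset as a (finite T0) space: open sets are the down-sets *)
definition poset_topology :: "'c set \<Rightarrow> ('c \<Rightarrow> 'c \<Rightarrow> bool) \<Rightarrow> 'c topology" where
  "poset_topology X R = topology (\<lambda>U. U \<subseteq> X \<and> (\<forall>x\<in>U. \<forall>y\<in>X. R y x \<longrightarrow> y \<in> U))"

lemma istopology_poset: "istopology (\<lambda>U. U \<subseteq> X \<and> (\<forall>x\<in>U. \<forall>y\<in>X. R y x \<longrightarrow> y \<in> U))"
  unfolding istopology_def by blast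

lemma openin_poset_topology:
  "openin (poset_topology X R) U \<longleftrightarrow> U \<subseteq> X \<and> (\<forall>x\<in>U. \<forall>y\<in>X. R y x \<longrightarrow> y \<in> U)"
  unfolding poset_topology_def by (simp add: topology_inverse'[OF istopology_poset])

end

theory Submission
  imports Defs "HOL-Algebra.SndIsomorphismGrp" "HOL-Algebra.Zassenhaus"
begin

lemma pow_factor:
  assumes "prime (p::nat)" "c * d = p ^ b"
  shows "\<exists>i. c = p ^ i"
proof -
  have "c dvd p ^ b" using assms(2) by (metis dvd_triv_left)
  then show ?thesis using divides_primepow_nat[OF assms(1)] by blast
qed

lemma pgroup_prod:
  assumes grp: "group G" and fin: "finite (carrier G)" and pr: "prime (p::nat)"
    and nN: "N \<lhd> G" and sP: "subgroup P G" and cN: "card N = p ^ a" and cP: "card P = p ^ b"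
  shows "\<exists>n. card (N <#>\<^bsub>G\<^esub> P) = p ^ n"
proof -
  interpret G: group G by (rule grp)
  interpret si: second_isomorphism_grp N G P
    unfolding second_isomorphism_grp_def second_isomorphism_grp_axioms_def using nN sP by auto
  have iso: "(\<lambda>X. the_elem ((\<lambda>g. N #>\<^bsub>G\<^esub> g) ` X)) \<in> iso ((G\<lparr>carrier := P\<rparr>) Mod (N \<inter> P)) ((G\<lparr>carrier := N <#>\<^bsub>G\<^esub> P\<rparr>) Mod N)"
    by (rule si.normal_intersection_quotient_isom)
  have ceq: "card (carrier ((G\<lparr>carrier := P\<rparr>) Mod (N \<inter> P))) = card (carrier ((G\<lparr>carrier := N <#>\<^bsub>G\<^esub> P\<rparr>) Mod N))"
    using iso unfolding iso_def by (auto intro: bij_betw_same_card)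
  interpret GP: group "G\<lparr>carrier := P\<rparr>" using sP G.subgroup_imp_group by blast
  interpret GNP: group "G\<lparr>carrier := N <#>\<^bsub>G\<^esub> P\<rparr>"
    using G.mult_norm_subgroup[OF nN sP] G.subgroup_imp_group by blast
  have s1: "subgroup (N \<inter> P) (G\<lparr>carrier := P\<rparr>)"
    using si.normal_subgrp_intersection_normal normal_imp_subgroup by (metis Int_commute)
  have s2: "subgroup N (G\<lparr>carrier := N <#>\<^bsub>G\<^esub> P\<rparr>)"
    using G.normal_in_normal_set_mult[OF nN sP] normal_imp_subgroup by blast
  have l1: "card (rcosets\<^bsub>G\<lparr>carrier := P\<rparr>\<^esub> (N \<inter> P)) * card (N \<inter> P) = card P"
    using GP.lagrange[OF s1] by (simp add: order_def)
  have l2: "card (rcosets\<^bsub>G\<lparr>carrier := N <#>\<^bsub>G\<^esub> P\<rparr>\<^esub> N) * card N = card (N <#>\<^bsub>G\<^esub> P)"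
    using GNP.lagrange[OF s2] by (simp add: order_def)
  have ceq': "card (rcosets\<^bsub>G\<lparr>carrier := P\<rparr>\<^esub> (N \<inter> P)) = card (rcosets\<^bsub>G\<lparr>carrier := N <#>\<^bsub>G\<^esub> P\<rparr>\<^esub> N)"
    using ceq by (simp add: FactGroup_def)
  obtain i where "card (rcosets\<^bsub>G\<lparr>carrier := P\<rparr>\<^esub> (N \<inter> P)) = p ^ i"
    using pow_factor[OF pr] l1 cP by metis
  then have "card (N <#>\<^bsub>G\<^esub> P) = p ^ (i + a)"
    using l2 ceq' cN by (simp add: power_add)
  then show ?thesis by blast
qed

lemma set_mult_contains:
  assumes grp: "group G" and nN: "N \<lhd> G" and sP: "subgroup P G"
  shows "N \<subseteq> N <#>\<^bsub>G\<^esub> P" "P \<subseteq> N <#>\<^bsub>G\<^esub> P"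
proof -
  interpret si: second_isomorphism_grp N G P
    unfolding second_isomorphism_grp_def second_isomorphism_grp_axioms_def using nN sP by auto
  show "N \<subseteq> N <#>\<^bsub>G\<^esub> P" "P \<subseteq> N <#>\<^bsub>G\<^esub> P"
    using si.H_contained_in_set_mult si.S_contained_in_set_mult by auto
qed

lemma Op_props:
  assumes grp: "group K" and fin: "finite (carrier K)" and pr: "prime (p::nat)"
  shows "p_subgroup K p (Op K p) \<and> Op K p \<lhd> K \<and>
         (\<forall>Q. p_subgroup K p Q \<and> Q \<lhd> K \<longrightarrow> Q \<subseteq> Op K p)"
proof -
  interpret K: group K by (rule grp)
  define A where "A = {Q. p_subgroup K p Q \<and> Q \<lhd> K}"
  have finA: "finite A"
    by (rule finite_subset[of _ "Pow (carrier K)"]) (auto simp: A_def p_subgroup_def fin dest: subgroup.subset)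
  have oneA: "{\<one>\<^bsub>K\<^esub>} \<in> A"
    unfolding A_def p_subgroup_def using K.one_is_normal K.triv_subgroup
    by (auto intro: exI[of _ 0])
  define m where "m = Max (card ` A)"
  have "m \<in> card ` A" unfolding m_def using finA oneA by (intro Max_in) auto
  then obtain M where MA: "M \<in> A" and cM: "card M = m" by auto
  have Mmax: "card Q \<le> card M" if "Q \<in> A" for Q
    unfolding cM m_def using finA that by (intro Max_ge) auto
  have big: "Q \<subseteq> M" if QA: "Q \<in> A" for Q
  proof -
    have nM: "M \<lhd> K" and nQ: "Q \<lhd> K" using MA QA by (auto simp: A_def)
    obtain a where a: "card M = p ^ a" using MA by (auto simp: A_def p_subgroup_def)
    obtain b where b: "card Q = p ^ b" using QA by (auto simp: A_def p_subgroup_def)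
    have sQ: "subgroup Q K" using nQ normal_imp_subgroup by blast
    have nMQ: "M <#>\<^bsub>K\<^esub> Q \<lhd> K" using K.normal_subgroup_set_mult_closed[OF nM nQ] .
    obtain n where "card (M <#>\<^bsub>K\<^esub> Q) = p ^ n" using pgroup_prod[OF grp fin pr nM sQ a b] by blast
    then have "M <#>\<^bsub>K\<^esub> Q \<in> A" using nMQ normal_imp_subgroup unfolding A_def p_subgroup_def by blast
    then have le: "card (M <#>\<^bsub>K\<^esub> Q) \<le> card M" by (rule Mmax)
    have sub: "M \<subseteq> M <#>\<^bsub>K\<^esub> Q" "Q \<subseteq> M <#>\<^bsub>K\<^esub> Q" using set_mult_contains[OF grp nM sQ] by auto
    have finMQ: "finite (M <#>\<^bsub>K\<^esub> Q)"
      using nMQ normal_imp_subgroup subgroup.subset fin finite_subset by metis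
    have "M = M <#>\<^bsub>K\<^esub> Q" using card_subset_eq[OF finMQ sub(1)] le sub(1) finMQ
      by (meson antisym card_mono)
    then show ?thesis using sub(2) by simp
  qed
  have P: "M \<in> A \<and> (\<forall>Q. Q \<in> A \<longrightarrow> Q \<subseteq> M)" using MA big by blast
  have ex1: "\<exists>!M. M \<in> A \<and> (\<forall>Q. Q \<in> A \<longrightarrow> Q \<subseteq> M)"
    using P by (metis subset_antisym)
  have "Op K p = (THE M. M \<in> A \<and> (\<forall>Q. Q \<in> A \<longrightarrow> Q \<subseteq> M))"
    unfolding Op_def A_def by simp
  then have "Op K p \<in> A \<and> (\<forall>Q. Q \<in> A \<longrightarrow> Q \<subseteq> Op K p)"
    using theI'[OF ex1] by simp
  then show ?thesis unfolding A_def by blast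
qed

lemma fixed_points_mod:
  assumes ga: "group_action K E \<phi>" and fin: "finite (carrier K)"
    and cK: "card (carrier K) = p ^ n" and pr: "prime (p::nat)"
    and AE: "A \<subseteq> E" and finA: "finite A"
    and invA: "\<forall>g\<in>carrier K. \<forall>x\<in>A. \<phi> g x \<in> A"
  shows "p dvd card (A - {x\<in>A. \<forall>g\<in>carrier K. \<phi> g x = x})"
proof -
  interpret ga: group_action K E \<phi> by (rule ga)
  interpret K: group K using ga.group_hom group_hom.axioms(1) by blast
  define B where "B = A - {x\<in>A. \<forall>g\<in>carrier K. \<phi> g x = x}"
  have BE: "B \<subseteq> E" using AE by (auto simp: B_def)
  have finB: "finite B" using finA by (auto simp: B_def)
  have orbB: "orbit K \<phi> x \<subseteq> B" if xB: "x \<in> B" for x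
  proof
    fix y assume "y \<in> orbit K \<phi> x"
    then obtain g where g: "g \<in> carrier K" "y = \<phi> g x" unfolding orbit_def by auto
    have yA: "y \<in> A" using invA g xB by (auto simp: B_def)
    have xE: "x \<in> E" using xB BE by auto
    have bk: "\<phi> (inv\<^bsub>K\<^esub> g) y = x" using ga.orbit_sym_aux[OF g(1) xE] g(2) by simp
    show "y \<in> B"
    proof (rule ccontr)
      assume "y \<notin> B"
      then have fy: "\<forall>h\<in>carrier K. \<phi> h y = y" using yA by (auto simp: B_def)
      then have "x = y" using bk g(1) by (metis K.inv_closed)
      then show False using fy xB by (auto simp: B_def)
    qed
  qed
  have dvd_orb: "p dvd card (orbit K \<phi> x)" if xB: "x \<in> B" for x
  proof -
    have xE: "x \<in> E" using xB BE by auto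
    have "card (orbit K \<phi> x) * card (stabilizer K \<phi> x) = p ^ n"
      using ga.orbit_stabilizer_theorem[OF xE] cK by (simp add: order_def)
    then obtain k where k: "card (orbit K \<phi> x) = p ^ k" using pow_factor[OF pr] by metis
    have finO: "finite (orbit K \<phi> x)" using orbB[OF xB] finB finite_subset by blast
    obtain g where g: "g \<in> carrier K" "\<phi> g x \<noteq> x" using xB by (auto simp: B_def)
    have "x \<in> orbit K \<phi> x" "\<phi> g x \<in> orbit K \<phi> x"
      using ga.orbit_refl[OF xE] g(1) unfolding orbit_def by auto
    then have "card {x, \<phi> g x} \<le> card (orbit K \<phi> x)"
      using finO by (intro card_mono) auto
    then have "card (orbit K \<phi> x) \<noteq> 1" using g(2) by auto
    then have "k \<noteq> 0" using k by auto
    then show ?thesis using k by (simp add: dvd_power)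
  qed
  have Beq: "B = \<Union> ((\<lambda>x. orbit K \<phi> x) ` B)"
    using orbB ga.orbit_refl BE by blast
  have disj: "pairwise disjnt ((\<lambda>x. orbit K \<phi> x) ` B)"
  proof (rule pairwiseI)
    fix O1 O2 assume "O1 \<in> (\<lambda>x. orbit K \<phi> x) ` B" "O2 \<in> (\<lambda>x. orbit K \<phi> x) ` B" "O1 \<noteq> O2"
    then obtain x y where xy: "x \<in> B" "y \<in> B" "O1 = orbit K \<phi> x" "O2 = orbit K \<phi> y" by auto
    show "disjnt O1 O2"
    proof (rule ccontr)
      assume "\<not> disjnt O1 O2"
      then obtain z where z: "z \<in> orbit K \<phi> x" "z \<in> orbit K \<phi> y" unfolding disjnt_def using xy by auto
      have E: "x \<in> E" "y \<in> E" "z \<in> E" using xy orbB BE z by blast+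
      have "orbit K \<phi> x = orbit K \<phi> y"
      proof -
        have s1: "orbit K \<phi> x \<subseteq> orbit K \<phi> y"
        proof
          fix w assume w: "w \<in> orbit K \<phi> x"
          have wE: "w \<in> E" using w orbB[OF xy(1)] BE by blast
          have "x \<in> orbit K \<phi> z" using ga.orbit_sym[OF E(1) E(3) z(1)] .
          have "z \<in> orbit K \<phi> w" by (meson E(1) E(3) ga.orbit_sym ga.orbit_trans w wE z(1))
          then show "w \<in> orbit K \<phi> y" by (meson E(2) E(3) ga.orbit_sym ga.orbit_trans wE z(2))
        qed
        have s2: "orbit K \<phi> y \<subseteq> orbit K \<phi> x"
        proof
          fix w assume w: "w \<in> orbit K \<phi> y"
          have wE: "w \<in> E" using w orbB[OF xy(2)] BE by blast
          have "z \<in> orbit K \<phi> w" by (meson E(2) E(3) ga.orbit_sym ga.orbit_trans w wE z(2))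
          then show "w \<in> orbit K \<phi> x" by (meson E(1) E(3) ga.orbit_sym ga.orbit_trans wE z(1))
        qed
        show ?thesis using s1 s2 by blast
      qed
      then show False using xy \<open>O1 \<noteq> O2\<close> by simp
    qed
  qed
  have "card B = sum card ((\<lambda>x. orbit K \<phi> x) ` B)"
    by (subst Beq, rule card_Union_disjoint[OF disj]) (use orbB finB finite_subset in blast)
  moreover have "p dvd sum card ((\<lambda>x. orbit K \<phi> x) ` B)"
    by (rule dvd_sum) (use dvd_orb in auto)
  ultimately show ?thesis by (simp add: B_def)
qed

lemma conj_image:
  assumes "group G" "M \<subseteq> carrier G" "g \<in> carrier G"
  shows "g <#\<^bsub>G\<^esub> M #>\<^bsub>G\<^esub> inv\<^bsub>G\<^esub> g = (\<lambda>h. g \<otimes>\<^bsub>G\<^esub> h \<otimes>\<^bsub>G\<^esub> inv\<^bsub>G\<^esub> g) ` M"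
  unfolding l_coset_def r_coset_def by auto

lemma conj_card:
  assumes grp: "group G" "M \<subseteq> carrier G" "g \<in> carrier G"
  shows "card (g <#\<^bsub>G\<^esub> M #>\<^bsub>G\<^esub> inv\<^bsub>G\<^esub> g) = card M"
proof -
  interpret G: group G by (rule grp)
  have "inj_on (\<lambda>h. g \<otimes>\<^bsub>G\<^esub> h \<otimes>\<^bsub>G\<^esub> inv\<^bsub>G\<^esub> g) M"
  proof (rule inj_onI)
    fix x y assume x: "x \<in> M" and y: "y \<in> M"
      and e: "g \<otimes>\<^bsub>G\<^esub> x \<otimes>\<^bsub>G\<^esub> inv\<^bsub>G\<^esub> g = g \<otimes>\<^bsub>G\<^esub> y \<otimes>\<^bsub>G\<^esub> inv\<^bsub>G\<^esub> g"
    have xc: "x \<in> carrier G" and yc: "y \<in> carrier G" using x y assms(2) by auto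
    show "x = y" using e xc yc assms(3) by simp
  qed
  then show ?thesis using conj_image[OF assms] by (simp add: card_image)
qed

lemma normalizer_growth:
  assumes grp: "group G" and fin: "finite (carrier G)" and pr: "prime (p::nat)"
    and sQ: "subgroup Q G" and cQ: "card Q = p ^ n" and sP: "subgroup P G"
    and PQ: "P \<subseteq> Q" and PneQ: "P \<noteq> Q"
  shows "\<exists>y\<in>Q - P. y <#\<^bsub>G\<^esub> P #>\<^bsub>G\<^esub> inv\<^bsub>G\<^esub> y = P"
proof -
  interpret G: group G by (rule grp)
  define \<phi> where "\<phi> = (\<lambda>g. \<lambda>H \<in> {H. H \<subseteq> carrier G}. g <#\<^bsub>G\<^esub> H #>\<^bsub>G\<^esub> (inv\<^bsub>G\<^esub> g))"
  define E where "E = {H. H \<subseteq> carrier G}"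
  have gaP: "group_action (G\<lparr>carrier := P\<rparr>) E \<phi>"
    unfolding \<phi>_def E_def
    by (rule group_action.induced_action[OF G.action_by_conjugation_on_power_set sP])
  have Psub: "P \<subseteq> carrier G" and Qsub: "Q \<subseteq> carrier G" using sP sQ subgroup.subset by auto
  have finQ: "finite Q" using Qsub fin finite_subset by blast
  interpret GQ: group "G\<lparr>carrier := Q\<rparr>" using sQ G.subgroup_imp_group by blast
  have sPQ: "subgroup P (G\<lparr>carrier := Q\<rparr>)" using G.subgroup_incl[OF sP sQ PQ] .
  define A where "A = {P #>\<^bsub>G\<^esub> y | y. y \<in> Q}"
  have rcA: "rcosets\<^bsub>G\<lparr>carrier := Q\<rparr>\<^esub> P = A"
    unfolding RCOSETS_def A_def r_coset_def by auto
  have lag: "card A * card P = card Q"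
    using GQ.lagrange[OF sPQ] rcA by (simp add: order_def)
  obtain m where cP: "card P = p ^ m" using pow_factor[OF pr, of "card P" "card A"] lag cQ by (metis mult.commute)
  obtain i where cA: "card A = p ^ i" using pow_factor[OF pr, of "card A" "card P"] lag cQ by metis
  have "card P < card Q" using PQ PneQ finQ by (meson psubsetI psubset_card_mono)
  then have "card A \<noteq> 1" using lag by auto
  then have pA: "p dvd card A" using cA by (cases i) auto
  have AE: "A \<subseteq> E" unfolding A_def E_def using Psub Qsub by (auto simp: r_coset_def)
  have finA: "finite A" unfolding A_def using finQ by simp
  have act: "\<phi> g (P #>\<^bsub>G\<^esub> y) = P #>\<^bsub>G\<^esub> (y \<otimes>\<^bsub>G\<^esub> inv\<^bsub>G\<^esub> g)" if g: "g \<in> P" and y: "y \<in> Q" for g y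
  proof -
    have gc: "g \<in> carrier G" and yc: "y \<in> carrier G" using g y Psub Qsub by auto
    have "P #>\<^bsub>G\<^esub> y \<subseteq> carrier G" using Psub yc by (auto simp: r_coset_def)
    then have "\<phi> g (P #>\<^bsub>G\<^esub> y) = g <#\<^bsub>G\<^esub> (P #>\<^bsub>G\<^esub> y) #>\<^bsub>G\<^esub> inv\<^bsub>G\<^esub> g"
      unfolding \<phi>_def by simp
    also have "\<dots> = (g <#\<^bsub>G\<^esub> P) #>\<^bsub>G\<^esub> y #>\<^bsub>G\<^esub> inv\<^bsub>G\<^esub> g"
      using G.coset_assoc[OF gc yc Psub] by simp
    also have "\<dots> = P #>\<^bsub>G\<^esub> y #>\<^bsub>G\<^esub> inv\<^bsub>G\<^esub> g"
      using G.coset_join3[OF gc sP g] by simp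
    also have "\<dots> = P #>\<^bsub>G\<^esub> (y \<otimes>\<^bsub>G\<^esub> inv\<^bsub>G\<^esub> g)"
      using G.coset_mult_assoc[OF Psub yc] gc by simp
    finally show ?thesis .
  qed
  have invA: "\<forall>g\<in>carrier (G\<lparr>carrier := P\<rparr>). \<forall>x\<in>A. \<phi> g x \<in> A"
  proof (intro ballI)
    fix g x assume g: "g \<in> carrier (G\<lparr>carrier := P\<rparr>)" and x: "x \<in> A"
    then obtain y where y: "y \<in> Q" "x = P #>\<^bsub>G\<^esub> y" unfolding A_def by auto
    have "inv\<^bsub>G\<^esub> g \<in> P" using g subgroup.m_inv_closed[OF sP] by simp
    then have "inv\<^bsub>G\<^esub> g \<in> Q" using PQ by blast
    then have "y \<otimes>\<^bsub>G\<^esub> inv\<^bsub>G\<^esub> g \<in> Q" using subgroup.m_closed[OF sQ y(1)] by blast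
    then show "\<phi> g x \<in> A" using act[of g y] g y unfolding A_def by auto
  qed
  define F where "F = {x\<in>A. \<forall>g\<in>carrier (G\<lparr>carrier := P\<rparr>). \<phi> g x = x}"
  have "p dvd card (A - F)"
    unfolding F_def
    by (rule fixed_points_mod[OF gaP _ _ pr AE finA invA]) (use finQ PQ finite_subset cP in auto)
  moreover have "card A = card F + card (A - F)"
  proof -
    have FA: "F \<subseteq> A" unfolding F_def by auto
    then have "card (A - F) = card A - card F" using finA finite_subset card_Diff_subset by metis
    moreover have "card F \<le> card A" using FA finA card_mono by blast
    ultimately show ?thesis by simp
  qed
  ultimately have pF: "p dvd card F" using pA dvd_add_left_iff by auto
  have "P #>\<^bsub>G\<^esub> \<one>\<^bsub>G\<^esub> = P" using Psub by simp
  then have PA: "P \<in> A" unfolding A_def using subgroup.one_closed[OF sQ] by blast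
  have PF: "P \<in> F"
  proof -
    have "\<phi> g P = P" if g: "g \<in> P" for g
    proof -
      have e1: "\<phi> g (P #>\<^bsub>G\<^esub> \<one>\<^bsub>G\<^esub>) = P #>\<^bsub>G\<^esub> (\<one>\<^bsub>G\<^esub> \<otimes>\<^bsub>G\<^esub> inv\<^bsub>G\<^esub> g)"
        using act[OF g subgroup.one_closed[OF sQ]] .
      have ip: "inv\<^bsub>G\<^esub> g \<in> P" using subgroup.m_inv_closed[OF sP g] by simp
      then have ic: "inv\<^bsub>G\<^esub> g \<in> carrier G" using Psub by (rule subsetD[rotated])
      have "P #>\<^bsub>G\<^esub> (\<one>\<^bsub>G\<^esub> \<otimes>\<^bsub>G\<^esub> inv\<^bsub>G\<^esub> g) = P #>\<^bsub>G\<^esub> inv\<^bsub>G\<^esub> g"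
        using ic by simp
      also have "\<dots> = P" using G.coset_join2[OF ic sP ip] .
      finally have e2: "P #>\<^bsub>G\<^esub> (\<one>\<^bsub>G\<^esub> \<otimes>\<^bsub>G\<^esub> inv\<^bsub>G\<^esub> g) = P" .
      have e3: "\<phi> g P = \<phi> g (P #>\<^bsub>G\<^esub> \<one>\<^bsub>G\<^esub>)" using \<open>P #>\<^bsub>G\<^esub> \<one>\<^bsub>G\<^esub> = P\<close> by (simp only:)
      show ?thesis using e3 e1 e2 by (simp only:)
    qed
    then have "\<forall>g\<in>carrier (G\<lparr>carrier := P\<rparr>). \<phi> g P = P" by simp
    then show ?thesis using PA unfolding F_def by blast
  qed
  have finF: "finite F" using finA F_def by auto
  have "card F \<noteq> 1"
  proof
    assume "card F = 1"
    then show False using pF pr by (simp add: prime_nat_iff)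
  qed
  then have "F \<noteq> {P}" by auto
  then obtain X where XF: "X \<in> F" "X \<noteq> P" using PF by blast
  then obtain y where y: "y \<in> Q" "X = P #>\<^bsub>G\<^esub> y" unfolding F_def A_def by auto
  have yc: "y \<in> carrier G" using y Qsub by auto
  have yP: "y \<notin> P"
  proof
    assume "y \<in> P"
    then have "P #>\<^bsub>G\<^esub> y = P" using G.coset_join2[OF yc sP] by blast
    then show False using XF y by simp
  qed
  have inP: "y \<otimes>\<^bsub>G\<^esub> h \<otimes>\<^bsub>G\<^esub> inv\<^bsub>G\<^esub> y \<in> P" if h: "h \<in> P" for h
  proof -
    have hc: "h \<in> carrier G" using h Psub by auto
    define g where "g = inv\<^bsub>G\<^esub> h"
    have g: "g \<in> P" unfolding g_def using subgroup.m_inv_closed[OF sP h] .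
    have "\<phi> g X = X" using XF(1) g unfolding F_def by auto
    then have eq: "P #>\<^bsub>G\<^esub> (y \<otimes>\<^bsub>G\<^esub> inv\<^bsub>G\<^esub> g) = P #>\<^bsub>G\<^esub> y" using act[OF g y(1)] y(2) by simp
    have "inv\<^bsub>G\<^esub> g = h" unfolding g_def using hc by simp
    then have eq': "P #>\<^bsub>G\<^esub> (y \<otimes>\<^bsub>G\<^esub> h) = P #>\<^bsub>G\<^esub> y" using eq by simp
    have "y \<otimes>\<^bsub>G\<^esub> h \<in> P #>\<^bsub>G\<^esub> y"
      using G.rcos_self[OF _ sP, of "y \<otimes>\<^bsub>G\<^esub> h"] eq' yc hc by simp
    then obtain q where q: "q \<in> P" "y \<otimes>\<^bsub>G\<^esub> h = q \<otimes>\<^bsub>G\<^esub> y" unfolding r_coset_def by auto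
    have qc: "q \<in> carrier G" using q Psub by auto
    have "y \<otimes>\<^bsub>G\<^esub> h \<otimes>\<^bsub>G\<^esub> inv\<^bsub>G\<^esub> y = q \<otimes>\<^bsub>G\<^esub> y \<otimes>\<^bsub>G\<^esub> inv\<^bsub>G\<^esub> y" using q by simp
    also have "\<dots> = q" using qc yc by (simp add: G.m_assoc)
    finally show ?thesis using q by simp
  qed
  have sub: "y <#\<^bsub>G\<^esub> P #>\<^bsub>G\<^esub> inv\<^bsub>G\<^esub> y \<subseteq> P"
    using conj_image[OF grp Psub yc] inP by auto
  have finP: "finite P" using Psub fin finite_subset by blast
  have "y <#\<^bsub>G\<^esub> P #>\<^bsub>G\<^esub> inv\<^bsub>G\<^esub> y = P"
    using card_subset_eq[OF finP sub] conj_card[OF grp Psub yc] by simp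
  then show ?thesis using y yP by blast
qed

lemma topspace_poset: "topspace (poset_topology X R) = X"
  unfolding topspace_def openin_poset_topology by blast

lemma continuous_map_poset:
  assumes "\<forall>x\<in>X. f x \<in> X" "\<forall>x\<in>X. \<forall>y\<in>X. R x y \<longrightarrow> R (f x) (f y)"
  shows "continuous_map (poset_topology X R) (poset_topology X R) f"
  unfolding continuous_map_def topspace_poset openin_poset_topology
  using assms by blast

lemma poset_homotopic:
  assumes fX: "\<forall>x\<in>X. f x \<in> X" and gX: "\<forall>x\<in>X. g x \<in> X"
    and fm: "\<forall>x\<in>X. \<forall>y\<in>X. R x y \<longrightarrow> R (f x) (f y)"
    and gm: "\<forall>x\<in>X. \<forall>y\<in>X. R x y \<longrightarrow> R (g x) (g y)"
    and fg: "\<forall>x\<in>X. R (f x) (g x)"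
  shows "homotopic_with (\<lambda>_. True) (poset_topology X R) (poset_topology X R) f g"
proof -
  define h where "h = (\<lambda>(t::real,x). if t = 1 then g x else f x)"
  have "continuous_map (prod_topology (top_of_set {0..1}) (poset_topology X R)) (poset_topology X R) h"
    unfolding continuous_map_def
  proof (intro conjI allI impI)
    show "h \<in> topspace (prod_topology (top_of_set {0..1}) (poset_topology X R)) \<rightarrow> topspace (poset_topology X R)"
      using fX gX by (auto simp: topspace_poset h_def)
  next
    fix U assume U: "openin (poset_topology X R) U"
    then have U': "U \<subseteq> X" "\<forall>x\<in>U. \<forall>y\<in>X. R y x \<longrightarrow> y \<in> U"
      unfolding openin_poset_topology by auto
    have eq: "{z \<in> topspace (prod_topology (top_of_set {0..1}) (poset_topology X R)). h z \<in> U}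
       = ({0..<1} \<times> {x\<in>X. f x \<in> U}) \<union> ({0..1} \<times> {x\<in>X. g x \<in> U})"
      using U' fg fX gX by (auto simp: topspace_poset h_def split: if_splits)
    have o1: "openin (top_of_set {0..1::real}) {0..<1}"
      unfolding openin_open by (rule exI[of _ "{..<1}"]) auto
    have o2: "openin (poset_topology X R) {x\<in>X. f x \<in> U}"
      using continuous_map_poset[OF fX fm] U unfolding continuous_map_def topspace_poset by blast
    have o3: "openin (poset_topology X R) {x\<in>X. g x \<in> U}"
      using continuous_map_poset[OF gX gm] U unfolding continuous_map_def topspace_poset by blast
    show "openin (prod_topology (top_of_set {0..1}) (poset_topology X R))
         {z \<in> topspace (prod_topology (top_of_set {0..1}) (poset_topology X R)). h z \<in> U}"
      unfolding eq
      by (intro openin_Un openin_prod_Times_iff[THEN iffD2] disjI2 conjI o1 o2 o3) auto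
  qed
  then show ?thesis unfolding homotopic_with_def
    by (intro exI[of _ h]) (auto simp: h_def)
qed

lemma orbit_image:
  assumes Feq: "\<forall>g\<in>carrier G. \<forall>c\<in>chains_poset S. F (chain_action G g c) = chain_action G g (F c)"
    and FCh: "\<forall>c\<in>chains_poset S. F c \<in> chains_poset S"
    and Ob: "Ob \<in> orbit_poset G S"
  shows "F ` Ob \<in> orbit_poset G S"
proof -
  obtain x where x: "x \<in> chains_poset S" "Ob = orbit G (chain_action G) x"
    using Ob unfolding orbit_poset_def orbits_def by auto
  have "F ` Ob = orbit G (chain_action G) (F x)"
    unfolding x(2) orbit_def using Feq x(1) by auto
  then show ?thesis using FCh x(1) unfolding orbit_poset_def orbits_def by auto
qed

lemma orbit_nonempty:
  assumes grp: "group G" and Ob: "Ob \<in> orbit_poset G S"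
  shows "Ob \<noteq> {}"
  using Ob monoid.one_closed[OF group.is_monoid[OF grp]] unfolding orbit_poset_def orbits_def orbit_def by auto

lemma orbit_homotopic:
  assumes grp: "group G"
    and D: "\<forall>Ob\<in>orbit_poset G S. Ob \<subseteq> D"
    and FCh: "\<forall>c\<in>chains_poset S. F c \<in> chains_poset S"
    and HCh: "\<forall>c\<in>chains_poset S. H c \<in> chains_poset S"
    and Feq: "\<forall>g\<in>carrier G. \<forall>c\<in>chains_poset S. F (chain_action G g c) = chain_action G g (F c)"
    and Heq: "\<forall>g\<in>carrier G. \<forall>c\<in>chains_poset S. H (chain_action G g c) = chain_action G g (H c)"
    and Fm: "\<forall>c\<in>D. \<forall>d\<in>D. c \<subseteq> d \<longrightarrow> F c \<subseteq> F d"
    and Hm: "\<forall>c\<in>D. \<forall>d\<in>D. c \<subseteq> d \<longrightarrow> H c \<subseteq> H d"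
    and FH: "\<forall>c\<in>D. F c \<subseteq> H c"
  shows "homotopic_with (\<lambda>_. True) (poset_topology (orbit_poset G S) orbit_le)
           (poset_topology (orbit_poset G S) orbit_le) (\<lambda>Ob. F ` Ob) (\<lambda>Ob. H ` Ob)"
proof (rule poset_homotopic)
  show "\<forall>x\<in>orbit_poset G S. F ` x \<in> orbit_poset G S" using orbit_image[OF Feq FCh] by blast
  show "\<forall>x\<in>orbit_poset G S. H ` x \<in> orbit_poset G S" using orbit_image[OF Heq HCh] by blast
  show "\<forall>x\<in>orbit_poset G S. \<forall>y\<in>orbit_poset G S. orbit_le x y \<longrightarrow> orbit_le (F ` x) (F ` y)"
  proof (intro ballI impI)
    fix x y assume x: "x \<in> orbit_poset G S" and y: "y \<in> orbit_poset G S" and "orbit_le x y"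
    then obtain c d where cd: "c \<in> x" "d \<in> y" "c \<subseteq> d" unfolding orbit_le_def by blast
    have "c \<in> D" "d \<in> D" using D x y cd by blast+
    then have "F c \<subseteq> F d" using Fm cd(3) by blast
    then show "orbit_le (F ` x) (F ` y)" unfolding orbit_le_def using cd by blast
  qed
  show "\<forall>x\<in>orbit_poset G S. \<forall>y\<in>orbit_poset G S. orbit_le x y \<longrightarrow> orbit_le (H ` x) (H ` y)"
  proof (intro ballI impI)
    fix x y assume x: "x \<in> orbit_poset G S" and y: "y \<in> orbit_poset G S" and "orbit_le x y"
    then obtain c d where cd: "c \<in> x" "d \<in> y" "c \<subseteq> d" unfolding orbit_le_def by blast
    have "c \<in> D" "d \<in> D" using D x y cd by blast+
    then have "H c \<subseteq> H d" using Hm cd(3) by blast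
    then show "orbit_le (H ` x) (H ` y)" unfolding orbit_le_def using cd by blast
  qed
  show "\<forall>x\<in>orbit_poset G S. orbit_le (F ` x) (H ` x)"
  proof
    fix Ob assume Ob: "Ob \<in> orbit_poset G S"
    then obtain c where c: "c \<in> Ob" using orbit_nonempty[OF grp] by blast
    then have "c \<in> D" using D Ob by blast
    then show "orbit_le (F ` Ob) (H ` Ob)" unfolding orbit_le_def using c FH by blast
  qed
qed

lemma normalizer_iff:
  assumes "P \<subseteq> carrier G"
  shows "y \<in> normalizer G P \<longleftrightarrow> y \<in> carrier G \<and> y <#\<^bsub>G\<^esub> P #>\<^bsub>G\<^esub> inv\<^bsub>G\<^esub> y = P"
  using assms unfolding normalizer_def stabilizer_def by auto

lemma conj_mono:
  assumes "P \<subseteq> Q" shows "conj_set G g P \<subseteq> conj_set G g Q"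
  using assms unfolding conj_set_def l_coset_def r_coset_def by auto

lemma set_mult_mono2:
  assumes "P \<subseteq> Q" shows "N <#>\<^bsub>G\<^esub> P \<subseteq> N <#>\<^bsub>G\<^esub> Q"
  using assms unfolding set_mult_def by auto

definition fstage :: "('a, 'b) monoid_scheme \<Rightarrow> 'a set \<Rightarrow> nat \<Rightarrow> 'a set \<Rightarrow> 'a set" where
  "fstage G N k P = (if k \<le> card P then N <#>\<^bsub>G\<^esub> P else P)"

lemma chain_action_image: "chain_action G g c = conj_set G g ` c"
  unfolding chain_action_def ..

context
  fixes G :: "('a, 'b) monoid_scheme" (structure) and p :: nat and N :: "'a set"
  assumes grp: "group G" and fin: "finite (carrier G)" and pr: "prime p"
    and N_def: "N = Op G p" and Nne: "N \<noteq> {\<one>\<^bsub>G\<^esub>}"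
begin

interpretation G: group G by (rule grp)

lemma N_props: "p_subgroup G p N" "N \<lhd> G"
  "\<And>Q. p_subgroup G p Q \<Longrightarrow> Q \<lhd> G \<Longrightarrow> Q \<subseteq> N"
  using Op_props[OF grp fin pr] unfolding N_def[symmetric] by auto

lemma N_sub: "N \<subseteq> carrier G"
  using N_props(1) unfolding p_subgroup_def using subgroup.subset by blast

lemma N_Sp: "N \<in> Sp G p"
  unfolding Sp_def using N_props(1) Nne by auto

lemma Sp_sub: assumes "P \<in> Sp G p" shows "subgroup P G" "P \<subseteq> carrier G" "finite P"
proof -
  show s: "subgroup P G" using assms unfolding Sp_def p_subgroup_def by auto
  show c: "P \<subseteq> carrier G" using subgroup.subset[OF s] .
  show "finite P" using finite_subset[OF c fin] .
qed

lemma conj_N: assumes g: "g \<in> carrier G" shows "conj_set G g N = N"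
proof -
  have img: "conj_set G g N = (\<lambda>h. g \<otimes> h \<otimes> inv g) ` N"
    unfolding conj_set_def using conj_image[OF grp N_sub g] .
  have "\<forall>h\<in>N. g \<otimes> h \<otimes> inv g \<in> N"
    using N_props(2) g unfolding G.normal_inv_iff by blast
  then have sub: "conj_set G g N \<subseteq> N" unfolding img by auto
  have finN: "finite N" using finite_subset[OF N_sub fin] .
  have "card (conj_set G g N) = card N" unfolding conj_set_def using conj_card[OF grp N_sub g] .
  then show ?thesis using card_subset_eq[OF finN sub] by simp
qed

lemma conj_Sp: assumes P: "P \<in> Sp G p" and g: "g \<in> carrier G" shows "conj_set G g P \<in> Sp G p"
proof -
  have s: "subgroup P G" and c: "P \<subseteq> carrier G" using Sp_sub[OF P] by auto
  have s': "subgroup (conj_set G g P) G" unfolding conj_set_def using G.subgroup_conjugation_is_surj2[OF g s] .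
  have cc: "card (conj_set G g P) = card P" unfolding conj_set_def using conj_card[OF grp c g] .
  obtain n where n: "card P = p ^ n" using P unfolding Sp_def p_subgroup_def by auto
  have ne: "conj_set G g P \<noteq> {\<one>}"
  proof
    assume e: "conj_set G g P = {\<one>}"
    then have "card P = 1" using cc by simp
    moreover have "\<one> \<in> P" using subgroup.one_closed[OF s] .
    moreover have "finite P" using Sp_sub[OF P] by simp
    ultimately have "P = {\<one>}" by (metis card_1_singletonE singletonD)
    then show False using P unfolding Sp_def by simp
  qed
  show ?thesis unfolding Sp_def p_subgroup_def using s' cc n ne by auto
qed

lemma conj_prod:
  assumes c: "P \<subseteq> carrier G" and g: "g \<in> carrier G"
  shows "conj_set G g (N <#> P) = N <#> conj_set G g P"
proof -
  have NP: "N <#> P \<subseteq> carrier G" using G.setmult_subset_G[OF N_sub c] .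
  have e1: "conj_set G g (N <#> P) = (\<lambda>h. g \<otimes> h \<otimes> inv g) ` (N <#> P)"
    unfolding conj_set_def using conj_image[OF grp NP g] .
  have e2: "conj_set G g P = (\<lambda>h. g \<otimes> h \<otimes> inv g) ` P"
    unfolding conj_set_def using conj_image[OF grp c g] .
  have ig: "inv g \<in> carrier G" using g by simp
  have cancel1: "\<And>x y. x \<in> carrier G \<Longrightarrow> y \<in> carrier G \<Longrightarrow> inv x \<otimes> (x \<otimes> y) = y"
    by (simp add: G.m_assoc[symmetric])
  have cancel2: "\<And>x y. x \<in> carrier G \<Longrightarrow> y \<in> carrier G \<Longrightarrow> x \<otimes> (inv x \<otimes> y) = y"
    by (simp add: G.m_assoc[symmetric])
  have nrm: "\<And>x h. x \<in> carrier G \<Longrightarrow> h \<in> N \<Longrightarrow> x \<otimes> h \<otimes> inv x \<in> N"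
    using N_props(2) unfolding G.normal_inv_iff by blast
  show ?thesis
  proof
    show "conj_set G g (N <#> P) \<subseteq> N <#> conj_set G g P"
    proof
      fix z assume "z \<in> conj_set G g (N <#> P)"
      then have "z \<in> (\<lambda>h. g \<otimes> h \<otimes> inv g) ` (N <#> P)" using e1 by simp
      then obtain n q where nq: "n \<in> N" "q \<in> P" "z = g \<otimes> (n \<otimes> q) \<otimes> inv g"
        unfolding set_mult_def by auto
      have nc: "n \<in> carrier G" and qc: "q \<in> carrier G" using nq N_sub c by auto
      have "z = (g \<otimes> n \<otimes> inv g) \<otimes> (g \<otimes> q \<otimes> inv g)"
        using nq(3) nc qc g ig by (simp add: G.m_assoc cancel1 cancel2)
      moreover have "g \<otimes> n \<otimes> inv g \<in> N" using nrm[OF g nq(1)] .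
      moreover have "g \<otimes> q \<otimes> inv g \<in> conj_set G g P" unfolding e2 using nq(2) by auto
      ultimately show "z \<in> N <#> conj_set G g P" unfolding set_mult_def by auto
    qed
  next
    show "N <#> conj_set G g P \<subseteq> conj_set G g (N <#> P)"
    proof
      fix z assume "z \<in> N <#> conj_set G g P"
      then have "z \<in> N <#> ((\<lambda>h. g \<otimes> h \<otimes> inv g) ` P)" using e2 by simp
      then obtain n q where nq: "n \<in> N" "q \<in> P" "z = n \<otimes> (g \<otimes> q \<otimes> inv g)"
        unfolding set_mult_def by auto
      have nc: "n \<in> carrier G" and qc: "q \<in> carrier G" using nq N_sub c by auto
      define n' where "n' = inv g \<otimes> n \<otimes> inv (inv g)"
      have n'N: "n' \<in> N" unfolding n'_def using nrm[OF ig nq(1)] .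
      have n'c: "n' \<in> carrier G" using n'N N_sub by auto
      have "z = g \<otimes> (n' \<otimes> q) \<otimes> inv g"
        unfolding n'_def using nq(3) nc qc g ig by (simp add: G.m_assoc cancel1 cancel2)
      moreover have "n' \<otimes> q \<in> N <#> P" unfolding set_mult_def using n'N nq(2) by auto
      ultimately show "z \<in> conj_set G g (N <#> P)" unfolding e1 by auto
    qed
  qed
qed


lemma r_Sp: assumes P: "P \<in> Sp G p"
  shows "N <#> P \<in> Sp G p" "P \<subseteq> N <#> P" "N \<subseteq> N <#> P"
proof -
  have s: "subgroup P G" using Sp_sub[OF P] by simp
  show sub: "P \<subseteq> N <#> P" "N \<subseteq> N <#> P" using set_mult_contains[OF grp N_props(2) s] by auto
  have sNP: "subgroup (N <#> P) G" using G.mult_norm_subgroup[OF N_props(2) s] .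
  obtain a where a: "card N = p ^ a" using N_props(1) unfolding p_subgroup_def by auto
  obtain b where b: "card P = p ^ b" using P unfolding Sp_def p_subgroup_def by auto
  obtain n where n: "card (N <#> P) = p ^ n" using pgroup_prod[OF grp fin pr N_props(2) s a b] by blast
  have ne: "N <#> P \<noteq> {\<one>}"
  proof
    assume "N <#> P = {\<one>}"
    then have "P \<subseteq> {\<one>}" using sub by simp
    moreover have "\<one> \<in> P" using subgroup.one_closed[OF s] .
    ultimately have "P = {\<one>}" by blast
    then show False using P unfolding Sp_def by simp
  qed
  show "N <#> P \<in> Sp G p" unfolding Sp_def p_subgroup_def using sNP n ne by auto
qed

lemma N_Bp: "N \<in> Bp G p"
proof -
  have "normalizer G N = carrier G"
    using normalizer_iff[OF N_sub] conj_N unfolding conj_set_def by auto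
  then have "G\<lparr>carrier := normalizer G N\<rparr> = G" by simp
  then show ?thesis unfolding Bp_def using N_Sp N_def by simp
qed

lemma Bp_above: assumes P: "P \<in> Bp G p" shows "N \<subseteq> P"
proof -
  have PSp: "P \<in> Sp G p" and Pe: "P = Op (G\<lparr>carrier := normalizer G P\<rparr>) p"
    using P unfolding Bp_def by auto
  have sP: "subgroup P G" and cP: "P \<subseteq> carrier G" using Sp_sub[OF PSp] by auto
  define NG where "NG = normalizer G P"
  have sNG: "subgroup NG G" unfolding NG_def using G.normalizer_imp_subgroup[OF cP] .
  have cNG: "NG \<subseteq> carrier G" using subgroup.subset[OF sNG] .
  interpret K: group "G\<lparr>carrier := NG\<rparr>" using G.subgroup_imp_group[OF sNG] .
  have finK: "finite (carrier (G\<lparr>carrier := NG\<rparr>))" using finite_subset[OF cNG fin] by simp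
  have OpK: "p_subgroup (G\<lparr>carrier := NG\<rparr>) p P" "\<And>Q. p_subgroup (G\<lparr>carrier := NG\<rparr>) p Q \<Longrightarrow> Q \<lhd> G\<lparr>carrier := NG\<rparr> \<Longrightarrow> Q \<subseteq> P"
  proof -
    have Pe': "Op (G\<lparr>carrier := NG\<rparr>) p = P" using Pe unfolding NG_def by simp
    have "p_subgroup (G\<lparr>carrier := NG\<rparr>) p (Op (G\<lparr>carrier := NG\<rparr>) p) \<and> Op (G\<lparr>carrier := NG\<rparr>) p \<lhd> G\<lparr>carrier := NG\<rparr> \<and>
         (\<forall>Q. p_subgroup (G\<lparr>carrier := NG\<rparr>) p Q \<and> Q \<lhd> G\<lparr>carrier := NG\<rparr> \<longrightarrow> Q \<subseteq> Op (G\<lparr>carrier := NG\<rparr>) p)"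
      using Op_props[OF K.is_group finK pr] .
    then have "p_subgroup (G\<lparr>carrier := NG\<rparr>) p P \<and> P \<lhd> G\<lparr>carrier := NG\<rparr> \<and>
         (\<forall>Q. p_subgroup (G\<lparr>carrier := NG\<rparr>) p Q \<and> Q \<lhd> G\<lparr>carrier := NG\<rparr> \<longrightarrow> Q \<subseteq> P)"
      unfolding Pe' .
    then show "p_subgroup (G\<lparr>carrier := NG\<rparr>) p P" "\<And>Q. p_subgroup (G\<lparr>carrier := NG\<rparr>) p Q \<Longrightarrow> Q \<lhd> G\<lparr>carrier := NG\<rparr> \<Longrightarrow> Q \<subseteq> P"
      by auto
  qed
  have PNG: "P \<subseteq> NG" using OpK(1) unfolding p_subgroup_def using subgroup.subset by force
  define M where "M = N \<inter> NG"
  have sN: "subgroup N G" using N_props(1) unfolding p_subgroup_def by simp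
  have sM: "subgroup M G" unfolding M_def using G.subgroups_Inter_pair[OF sN sNG] .
  have sMK: "subgroup M (G\<lparr>carrier := NG\<rparr>)" using G.subgroup_incl[OF sM sNG] unfolding M_def by auto
  have cM: "\<exists>i. card M = p ^ i"
  proof -
    interpret GN: group "G\<lparr>carrier := N\<rparr>" using G.subgroup_imp_group[OF sN] .
    have sMN: "subgroup M (G\<lparr>carrier := N\<rparr>)" using G.subgroup_incl[OF sM sN] unfolding M_def by auto
    have "card (rcosets\<^bsub>G\<lparr>carrier := N\<rparr>\<^esub> M) * card M = card N"
      using GN.lagrange[OF sMN] by (simp add: order_def)
    moreover obtain a where a: "card N = p ^ a" using N_props(1) unfolding p_subgroup_def by auto
    ultimately show ?thesis using pow_factor[OF pr, of "card M"] by (metis mult.commute)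
  qed
  have nM: "M \<lhd> G\<lparr>carrier := NG\<rparr>"
    unfolding K.normal_inv_iff
  proof (intro conjI ballI sMK)
    fix x h assume x: "x \<in> carrier (G\<lparr>carrier := NG\<rparr>)" and h: "h \<in> M"
    have xN: "x \<in> NG" using x by simp
    have xc: "x \<in> carrier G" using xN cNG by auto
    have hN: "h \<in> N" and hNG: "h \<in> NG" using h unfolding M_def by auto
    have "inv\<^bsub>G\<lparr>carrier := NG\<rparr>\<^esub> x = inv x" using G.m_inv_consistent[OF sNG xN] .
    moreover have "x \<otimes> h \<otimes> inv x \<in> N"
      using N_props(2) xc hN unfolding G.normal_inv_iff by blast
    moreover have "x \<otimes> h \<otimes> inv x \<in> NG"
      using subgroup.m_closed[OF sNG subgroup.m_closed[OF sNG xN hNG] subgroup.m_inv_closed[OF sNG xN]] .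
    ultimately show "x \<otimes>\<^bsub>G\<lparr>carrier := NG\<rparr>\<^esub> h \<otimes>\<^bsub>G\<lparr>carrier := NG\<rparr>\<^esub> inv\<^bsub>G\<lparr>carrier := NG\<rparr>\<^esub> x \<in> M"
      unfolding M_def by simp
  qed
  have MP: "M \<subseteq> P" using OpK(2)[OF _ nM] sMK cM unfolding p_subgroup_def by blast
  define Q where "Q = N <#> P"
  have sQ: "subgroup Q G" unfolding Q_def using G.mult_norm_subgroup[OF N_props(2) sP] .
  obtain a where a: "card N = p ^ a" using N_props(1) unfolding p_subgroup_def by auto
  obtain b where b: "card P = p ^ b" using PSp unfolding Sp_def p_subgroup_def by auto
  obtain n where cQ: "card Q = p ^ n" unfolding Q_def using pgroup_prod[OF grp fin pr N_props(2) sP a b] by blast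
  have PQ: "P \<subseteq> Q" and NQ: "N \<subseteq> Q" unfolding Q_def using r_Sp[OF PSp] by auto
  have "P = Q"
  proof (rule ccontr)
    assume "P \<noteq> Q"
    then obtain y where y: "y \<in> Q - P" "y <#\<^bsub>G\<^esub> P #>\<^bsub>G\<^esub> inv\<^bsub>G\<^esub> y = P"
      using normalizer_growth[OF grp fin pr sQ cQ sP PQ] by blast
    have yc: "y \<in> carrier G" using y(1) subgroup.subset[OF sQ] by auto
    have yNG: "y \<in> NG" unfolding NG_def using normalizer_iff[OF cP] yc y(2) by simp
    obtain n x where nx: "n \<in> N" "x \<in> P" "y = n \<otimes> x" using y(1) unfolding Q_def set_mult_def by auto
    have nc: "n \<in> carrier G" and xc: "x \<in> carrier G" using nx N_sub cP by auto
    have xNG: "x \<in> NG" using nx(2) PNG by auto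
    have "n = y \<otimes> inv x" using nx(3) nc xc by (simp add: G.m_assoc)
    moreover have "y \<otimes> inv x \<in> NG" using subgroup.m_closed[OF sNG yNG subgroup.m_inv_closed[OF sNG xNG]] .
    ultimately have "n \<in> M" unfolding M_def using nx(1) by simp
    then have "n \<in> P" using MP by auto
    then have "y \<in> P" using nx(2,3) subgroup.m_closed[OF sP] by simp
    then show False using y(1) by simp
  qed
  then show ?thesis using NQ by simp
qed


lemma fs_Sp: "P \<in> Sp G p \<Longrightarrow> fstage G N k P \<in> Sp G p"
  unfolding fstage_def using r_Sp by auto

lemma fs_sup: "P \<in> Sp G p \<Longrightarrow> P \<subseteq> fstage G N k P"
  unfolding fstage_def using r_Sp by auto

lemma fs_mono: assumes P: "P \<in> Sp G p" and Q: "Q \<in> Sp G p" and PQ: "P \<subseteq> Q"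
  shows "fstage G N k P \<subseteq> fstage G N k Q"
proof -
  have "card P \<le> card Q" using card_mono[OF Sp_sub(3)[OF Q] PQ] .
  then show ?thesis unfolding fstage_def using set_mult_mono2[OF PQ] PQ r_Sp(2)[OF Q] by auto
qed

lemma fs_conj: assumes P: "P \<in> Sp G p" and g: "g \<in> carrier G"
  shows "fstage G N k (conj_set G g P) = conj_set G g (fstage G N k P)"
proof -
  have "card (conj_set G g P) = card P" unfolding conj_set_def using conj_card[OF grp Sp_sub(2)[OF P] g] .
  then show ?thesis unfolding fstage_def using conj_prod[OF Sp_sub(2)[OF P] g] by simp
qed

lemma fs_cross: assumes P: "P \<in> Sp G p" and Q: "Q \<in> Sp G p" and PQ: "P \<subseteq> Q"
  shows "fstage G N k P \<subseteq> fstage G N (Suc k) Q \<or> fstage G N (Suc k) Q \<subseteq> fstage G N k P"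
proof -
  have cPQ: "card P \<le> card Q" using card_mono[OF Sp_sub(3)[OF Q] PQ] .
  consider "Suc k \<le> card Q" | "card Q < k" | "card Q = k" by linarith
  then show ?thesis
  proof cases
    case 1
    then have "fstage G N (Suc k) Q = fstage G N k Q" unfolding fstage_def by simp
    then show ?thesis using fs_mono[OF P Q PQ, of k] by simp
  next
    case 2
    then show ?thesis unfolding fstage_def using PQ cPQ by auto
  next
    case 3
    show ?thesis
    proof (cases "card P < k")
      case True
      then show ?thesis unfolding fstage_def using PQ 3 by auto
    next
      case False
      then have "card P = card Q" using 3 cPQ by simp
      then have "P = Q" using card_subset_eq[OF Sp_sub(3)[OF Q] PQ] by simp
      then show ?thesis unfolding fstage_def using 3 r_Sp(2)[OF Q] by auto
    qed
  qed
qed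

lemma fs_decr: "P \<in> Sp G p \<Longrightarrow> fstage G N (Suc k) P \<subseteq> fstage G N k P"
  unfolding fstage_def using r_Sp(2) by auto

lemma orb_sub: "\<forall>Ob\<in>orbit_poset G (Sp G p). Ob \<subseteq> chains_poset (Sp G p)"
proof (intro ballI subsetI)
  fix Ob c assume Ob: "Ob \<in> orbit_poset G (Sp G p)" and c: "c \<in> Ob"
  obtain x where x: "x \<in> chains_poset (Sp G p)" "Ob = orbit G (chain_action G) x"
    using Ob unfolding orbit_poset_def orbits_def by auto
  obtain g where g: "g \<in> carrier G" "c = conj_set G g ` x"
    using c x(2) unfolding orbit_def chain_action_image by auto
  have xs: "x \<noteq> {}" "x \<subseteq> Sp G p" "\<forall>a\<in>x. \<forall>b\<in>x. a \<subseteq> b \<or> b \<subseteq> a"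
    using x(1) unfolding chains_poset_def by auto
  have "c \<noteq> {}" using xs(1) g(2) by simp
  moreover have "c \<subseteq> Sp G p" using xs(2) g conj_Sp by auto
  moreover have "\<forall>a\<in>c. \<forall>b\<in>c. a \<subseteq> b \<or> b \<subseteq> a"
  proof (intro ballI)
    fix a b assume "a \<in> c" "b \<in> c"
    then obtain P Q where PQ: "P \<in> x" "Q \<in> x" "a = conj_set G g P" "b = conj_set G g Q" using g(2) by auto
    from xs(3) PQ(1,2) have "P \<subseteq> Q \<or> Q \<subseteq> P" by blast
    then show "a \<subseteq> b \<or> b \<subseteq> a" using PQ(3,4) conj_mono by metis
  qed
  ultimately show "c \<in> chains_poset (Sp G p)" unfolding chains_poset_def by blast
qed

lemma stage_homotopic:
  "homotopic_with (\<lambda>_. True) (poset_topology (orbit_poset G (Sp G p)) orbit_le)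
     (poset_topology (orbit_poset G (Sp G p)) orbit_le)
     (\<lambda>Ob. (\<lambda>c. fstage G N (Suc k) ` c) ` Ob) (\<lambda>Ob. (\<lambda>c. fstage G N k ` c) ` Ob)"
proof -
  let ?Ch = "chains_poset (Sp G p)"
  define F where "F = (\<lambda>j c. fstage G N j ` c)"
  define H where "H = (\<lambda>c. F k c \<union> F (Suc k) c)"
  have FCh: "\<forall>c\<in>?Ch. F j c \<in> ?Ch" for j
  proof
    fix c assume c: "c \<in> ?Ch"
    have sub: "c \<subseteq> Sp G p" and ch: "\<forall>a\<in>c. \<forall>b\<in>c. a \<subseteq> b \<or> b \<subseteq> a" and ne: "c \<noteq> {}"
      using c unfolding chains_poset_def by auto
    have "F j c \<subseteq> Sp G p" unfolding F_def using sub fs_Sp by auto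
    moreover have "F j c \<noteq> {}" unfolding F_def using ne by auto
    moreover have "\<forall>a\<in>F j c. \<forall>b\<in>F j c. a \<subseteq> b \<or> b \<subseteq> a"
    proof (intro ballI)
      fix a b assume "a \<in> F j c" "b \<in> F j c"
      then obtain P Q where PQ: "P \<in> c" "Q \<in> c" "a = fstage G N j P" "b = fstage G N j Q"
        unfolding F_def by auto
      have PS: "P \<in> Sp G p" and QS: "Q \<in> Sp G p" using PQ sub by auto
      from ch PQ(1,2) have "P \<subseteq> Q \<or> Q \<subseteq> P" by blast
      then show "a \<subseteq> b \<or> b \<subseteq> a" using fs_mono[OF PS QS] fs_mono[OF QS PS] PQ(3,4) by blast
    qed
    ultimately show "F j c \<in> ?Ch" unfolding chains_poset_def by blast
  qed
  have HCh: "\<forall>c\<in>?Ch. H c \<in> ?Ch"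
  proof
    fix c assume c: "c \<in> ?Ch"
    have sub: "c \<subseteq> Sp G p" and ch: "\<forall>a\<in>c. \<forall>b\<in>c. a \<subseteq> b \<or> b \<subseteq> a" and ne: "c \<noteq> {}"
      using c unfolding chains_poset_def by auto
    have "H c \<subseteq> Sp G p" unfolding H_def F_def using sub fs_Sp by auto
    moreover have "H c \<noteq> {}" unfolding H_def F_def using ne by auto
    moreover have "\<forall>a\<in>H c. \<forall>b\<in>H c. a \<subseteq> b \<or> b \<subseteq> a"
    proof -
      have cross: "fstage G N k P \<subseteq> fstage G N (Suc k) Q \<or> fstage G N (Suc k) Q \<subseteq> fstage G N k P"
        if P: "P \<in> c" and Q: "Q \<in> c" for P Q
      proof -
        have PS: "P \<in> Sp G p" and QS: "Q \<in> Sp G p" using P Q sub by auto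
        from ch P Q have "P \<subseteq> Q \<or> Q \<subseteq> P" by blast
        then show ?thesis
        proof
          assume "P \<subseteq> Q" then show ?thesis using fs_cross[OF PS QS] by blast
        next
          assume QP: "Q \<subseteq> P"
          have "fstage G N (Suc k) Q \<subseteq> fstage G N (Suc k) P" using fs_mono[OF QS PS QP] .
          also have "\<dots> \<subseteq> fstage G N k P" using fs_decr[OF PS] .
          finally show ?thesis by blast
        qed
      qed
      have same: "fstage G N j P \<subseteq> fstage G N j Q \<or> fstage G N j Q \<subseteq> fstage G N j P"
        if P: "P \<in> c" and Q: "Q \<in> c" for P Q j
      proof -
        have PS: "P \<in> Sp G p" and QS: "Q \<in> Sp G p" using P Q sub by auto
        from ch P Q have "P \<subseteq> Q \<or> Q \<subseteq> P" by blast
        then show ?thesis using fs_mono[OF PS QS] fs_mono[OF QS PS] by blast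
      qed
      show ?thesis
      proof (intro ballI)
        fix a b assume a: "a \<in> H c" and b: "b \<in> H c"
        from a obtain P j1 where P: "P \<in> c" "a = fstage G N j1 P" "j1 = k \<or> j1 = Suc k"
          unfolding H_def F_def by auto
        from b obtain Q j2 where Q: "Q \<in> c" "b = fstage G N j2 Q" "j2 = k \<or> j2 = Suc k"
          unfolding H_def F_def by auto
        show "a \<subseteq> b \<or> b \<subseteq> a"
        proof (cases "j1 = j2")
          case True
          then show ?thesis using same[OF P(1) Q(1), of j1] P(2) Q(2) by simp
        next
          case False
          then have "(j1 = k \<and> j2 = Suc k) \<or> (j1 = Suc k \<and> j2 = k)" using P(3) Q(3) by auto
          then show ?thesis
          proof
            assume "j1 = k \<and> j2 = Suc k"
            then show ?thesis using cross[OF P(1) Q(1)] P(2) Q(2) by simp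
          next
            assume "j1 = Suc k \<and> j2 = k"
            then show ?thesis using cross[OF Q(1) P(1)] P(2) Q(2) by auto
          qed
        qed
      qed
    qed
    ultimately show "H c \<in> ?Ch" unfolding chains_poset_def by blast
  qed
  have Feq: "\<forall>g\<in>carrier G. \<forall>c\<in>?Ch. F j (chain_action G g c) = chain_action G g (F j c)" for j
  proof (intro ballI)
    fix g c assume g: "g \<in> carrier G" and c: "c \<in> ?Ch"
    have sub: "c \<subseteq> Sp G p" using c unfolding chains_poset_def by auto
    show "F j (chain_action G g c) = chain_action G g (F j c)"
      unfolding F_def chain_action_image image_image
      using fs_conj[OF _ g] sub by (intro image_cong refl) auto
  qed
  have Heq: "\<forall>g\<in>carrier G. \<forall>c\<in>?Ch. H (chain_action G g c) = chain_action G g (H c)"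
    unfolding H_def using Feq by (simp add: chain_action_image image_Un)
  have Fm: "\<forall>c\<in>?Ch. \<forall>d\<in>?Ch. c \<subseteq> d \<longrightarrow> F j c \<subseteq> F j d" for j
    unfolding F_def by auto
  have Hm: "\<forall>c\<in>?Ch. \<forall>d\<in>?Ch. c \<subseteq> d \<longrightarrow> H c \<subseteq> H d"
    unfolding H_def F_def by auto
  have h1: "homotopic_with (\<lambda>_. True) (poset_topology (orbit_poset G (Sp G p)) orbit_le)
     (poset_topology (orbit_poset G (Sp G p)) orbit_le) (\<lambda>Ob. F (Suc k) ` Ob) (\<lambda>Ob. H ` Ob)"
    by (rule orbit_homotopic[OF grp orb_sub FCh HCh Feq Heq Fm Hm]) (auto simp: H_def)
  have h2: "homotopic_with (\<lambda>_. True) (poset_topology (orbit_poset G (Sp G p)) orbit_le)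
     (poset_topology (orbit_poset G (Sp G p)) orbit_le) (\<lambda>Ob. F k ` Ob) (\<lambda>Ob. H ` Ob)"
    by (rule orbit_homotopic[OF grp orb_sub FCh HCh Feq Heq Fm Hm]) (auto simp: H_def)
  show ?thesis using homotopic_with_trans[OF h1 homotopic_with_symD[OF h2]] unfolding F_def .
qed


lemma stages_homotopic:
  "homotopic_with (\<lambda>_. True) (poset_topology (orbit_poset G (Sp G p)) orbit_le)
     (poset_topology (orbit_poset G (Sp G p)) orbit_le)
     (\<lambda>Ob. (\<lambda>c. fstage G N m ` c) ` Ob) (\<lambda>Ob. (\<lambda>c. fstage G N 0 ` c) ` Ob)"
proof (induction m)
  case 0
  let ?Ch = "chains_poset (Sp G p)"
  have FCh: "\<forall>c\<in>?Ch. fstage G N 0 ` c \<in> ?Ch"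
  proof
    fix c assume c: "c \<in> ?Ch"
    have sub: "c \<subseteq> Sp G p" and ne: "c \<noteq> {}" using c unfolding chains_poset_def by auto
    have "fstage G N 0 ` c \<subseteq> Sp G p" using sub fs_Sp by auto
    moreover have "fstage G N 0 ` c \<noteq> {}" using ne by auto
    moreover have "\<forall>a\<in>fstage G N 0 ` c. \<forall>b\<in>fstage G N 0 ` c. a \<subseteq> b \<or> b \<subseteq> a"
    proof (intro ballI)
      fix a b assume "a \<in> fstage G N 0 ` c" "b \<in> fstage G N 0 ` c"
      then obtain P Q where PQ: "P \<in> c" "Q \<in> c" "a = fstage G N 0 P" "b = fstage G N 0 Q" by auto
      have PS: "P \<in> Sp G p" and QS: "Q \<in> Sp G p" using PQ sub by auto
      have "P \<subseteq> Q \<or> Q \<subseteq> P" using c PQ(1,2) unfolding chains_poset_def by blast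
      then show "a \<subseteq> b \<or> b \<subseteq> a" using fs_mono[OF PS QS] fs_mono[OF QS PS] PQ(3,4) by blast
    qed
    ultimately show "fstage G N 0 ` c \<in> ?Ch" unfolding chains_poset_def by blast
  qed
  have Feq: "\<forall>g\<in>carrier G. \<forall>c\<in>?Ch. fstage G N 0 ` (chain_action G g c) = chain_action G g (fstage G N 0 ` c)"
  proof (intro ballI)
    fix g c assume g: "g \<in> carrier G" and c: "c \<in> ?Ch"
    have sub: "c \<subseteq> Sp G p" using c unfolding chains_poset_def by auto
    show "fstage G N 0 ` (chain_action G g c) = chain_action G g (fstage G N 0 ` c)"
      unfolding chain_action_image image_image
      using fs_conj[OF _ g] sub by (intro image_cong refl) auto
  qed
  show ?case
    by (rule orbit_homotopic[OF grp orb_sub FCh FCh Feq Feq]) auto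
next
  case (Suc m)
  show ?case using homotopic_with_trans[OF stage_homotopic Suc.IH] .
qed

lemma Sp_contractible: "contractible_space (poset_topology (orbit_poset G (Sp G p)) orbit_le)"
proof -
  let ?Ch = "chains_poset (Sp G p)"
  let ?T = "poset_topology (orbit_poset G (Sp G p)) orbit_le"
  define K where "K = Suc (card (carrier G))"
  have idK: "(\<lambda>c. fstage G N K ` c) ` Ob = id Ob" if Ob: "Ob \<in> orbit_poset G (Sp G p)" for Ob
  proof -
    have "fstage G N K ` c = c" if c: "c \<in> Ob" for c
    proof -
      have "c \<subseteq> Sp G p" using c Ob orb_sub unfolding chains_poset_def by blast
      moreover have "fstage G N K P = P" if P: "P \<in> Sp G p" for P
      proof -
        have "card P \<le> card (carrier G)" using card_mono[OF fin Sp_sub(2)[OF P]] .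
        then show ?thesis unfolding fstage_def K_def by simp
      qed
      ultimately show ?thesis by (simp add: subset_iff)
    qed
    then show ?thesis by simp
  qed
  have h1: "homotopic_with (\<lambda>_. True) ?T ?T id (\<lambda>Ob. (\<lambda>c. fstage G N 0 ` c) ` Ob)"
    by (rule homotopic_with_eq[OF stages_homotopic[of K]]) (auto simp: topspace_poset idK)
  define Hf where "Hf = (\<lambda>c. fstage G N 0 ` c \<union> {N})"
  have ChHf: "\<forall>c\<in>?Ch. Hf c \<in> ?Ch"
  proof
    fix c assume c: "c \<in> ?Ch"
    have sub: "c \<subseteq> Sp G p" using c unfolding chains_poset_def by auto
    have "Hf c \<subseteq> Sp G p" unfolding Hf_def using sub fs_Sp N_Sp by auto
    moreover have "Hf c \<noteq> {}" unfolding Hf_def by auto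
    moreover have "\<forall>a\<in>Hf c. \<forall>b\<in>Hf c. a \<subseteq> b \<or> b \<subseteq> a"
    proof (intro ballI)
      fix a b assume a: "a \<in> Hf c" and b: "b \<in> Hf c"
      have up: "N \<subseteq> fstage G N 0 P" if "P \<in> c" for P
        unfolding fstage_def using r_Sp(3) sub that by auto
      have same: "fstage G N 0 P \<subseteq> fstage G N 0 Q \<or> fstage G N 0 Q \<subseteq> fstage G N 0 P"
        if P: "P \<in> c" and Q: "Q \<in> c" for P Q
      proof -
        have PS: "P \<in> Sp G p" and QS: "Q \<in> Sp G p" using P Q sub by auto
        have "P \<subseteq> Q \<or> Q \<subseteq> P" using c P Q unfolding chains_poset_def by blast
        then show ?thesis using fs_mono[OF PS QS] fs_mono[OF QS PS] by blast
      qed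
      have a': "a = N \<or> (\<exists>P\<in>c. a = fstage G N 0 P)" using a unfolding Hf_def by auto
      have b': "b = N \<or> (\<exists>Q\<in>c. b = fstage G N 0 Q)" using b unfolding Hf_def by auto
      show "a \<subseteq> b \<or> b \<subseteq> a"
      proof (cases "a = N")
        case True
        then show ?thesis using b' up by auto
      next
        case False
        then obtain P where P: "P \<in> c" "a = fstage G N 0 P" using a' by auto
        show ?thesis
        proof (cases "b = N")
          case True
          then show ?thesis using P up by auto
        next
          case False
          then obtain Q where Q: "Q \<in> c" "b = fstage G N 0 Q" using b' by auto
          show ?thesis using same[OF P(1) Q(1)] P(2) Q(2) by simp
        qed
      qed
    qed
    ultimately show "Hf c \<in> ?Ch" unfolding chains_poset_def by blast
  qed
  have F0Ch: "\<forall>c\<in>?Ch. fstage G N 0 ` c \<in> ?Ch"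
  proof
    fix c assume c: "c \<in> ?Ch"
    have sub: "c \<subseteq> Sp G p" and ne: "c \<noteq> {}" using c unfolding chains_poset_def by auto
    have "fstage G N 0 ` c \<subseteq> Sp G p" using sub fs_Sp by auto
    moreover have "fstage G N 0 ` c \<noteq> {}" using ne by auto
    moreover have "\<forall>a\<in>fstage G N 0 ` c. \<forall>b\<in>fstage G N 0 ` c. a \<subseteq> b \<or> b \<subseteq> a"
    proof (intro ballI)
      fix a b assume "a \<in> fstage G N 0 ` c" "b \<in> fstage G N 0 ` c"
      then obtain P Q where PQ: "P \<in> c" "Q \<in> c" "a = fstage G N 0 P" "b = fstage G N 0 Q" by auto
      have PS: "P \<in> Sp G p" and QS: "Q \<in> Sp G p" using PQ sub by auto
      have "P \<subseteq> Q \<or> Q \<subseteq> P" using c PQ(1,2) unfolding chains_poset_def by blast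
      then show "a \<subseteq> b \<or> b \<subseteq> a" using fs_mono[OF PS QS] fs_mono[OF QS PS] PQ(3,4) by blast
    qed
    ultimately show "fstage G N 0 ` c \<in> ?Ch" unfolding chains_poset_def by blast
  qed
  have CCh: "\<forall>c\<in>?Ch. (\<lambda>c. {N}) c \<in> ?Ch" using N_Sp unfolding chains_poset_def by auto
  have F0eq: "\<forall>g\<in>carrier G. \<forall>c\<in>?Ch. fstage G N 0 ` (chain_action G g c) = chain_action G g (fstage G N 0 ` c)"
  proof (intro ballI)
    fix g c assume g: "g \<in> carrier G" and c: "c \<in> ?Ch"
    have sub: "c \<subseteq> Sp G p" using c unfolding chains_poset_def by auto
    show "fstage G N 0 ` (chain_action G g c) = chain_action G g (fstage G N 0 ` c)"
      unfolding chain_action_image image_image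
      using fs_conj[OF _ g] sub by (intro image_cong refl) auto
  qed
  have Heq: "\<forall>g\<in>carrier G. \<forall>c\<in>?Ch. Hf (chain_action G g c) = chain_action G g (Hf c)"
    using F0eq conj_N unfolding Hf_def by (simp add: chain_action_image image_Un)
  have Ceq: "\<forall>g\<in>carrier G. \<forall>c\<in>?Ch. (\<lambda>c. {N}) (chain_action G g c) = chain_action G g ((\<lambda>c. {N}) c)"
    using conj_N by (simp add: chain_action_image)
  have h2: "homotopic_with (\<lambda>_. True) ?T ?T (\<lambda>Ob. (\<lambda>c. fstage G N 0 ` c) ` Ob) (\<lambda>Ob. Hf ` Ob)"
    by (rule orbit_homotopic[OF grp orb_sub F0Ch ChHf F0eq Heq]) (auto simp: Hf_def)
  have h3: "homotopic_with (\<lambda>_. True) ?T ?T (\<lambda>Ob. (\<lambda>c. {N}) ` Ob) (\<lambda>Ob. Hf ` Ob)"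
    by (rule orbit_homotopic[OF grp orb_sub CCh ChHf Ceq Heq]) (auto simp: Hf_def)
  have h3': "homotopic_with (\<lambda>_. True) ?T ?T (\<lambda>Ob. {{N}}) (\<lambda>Ob. Hf ` Ob)"
    by (rule homotopic_with_eq[OF h3]) (auto simp: topspace_poset dest: orbit_nonempty[OF grp])
  have "homotopic_with (\<lambda>_. True) ?T ?T id (\<lambda>Ob. {{N}})"
    using homotopic_with_trans[OF h1 homotopic_with_trans[OF h2 homotopic_with_symD[OF h3']]] .
  then show ?thesis unfolding contractible_space_def by blast
qed

lemma Bp_contractible: "contractible_space (poset_topology (orbit_poset G (Bp G p)) orbit_le)"
proof -
  let ?Ch = "chains_poset (Bp G p)"
  let ?T = "poset_topology (orbit_poset G (Bp G p)) orbit_le"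
  define Hf where "Hf = (\<lambda>c::'a set set. c \<union> {N})"
  have D: "\<forall>Ob\<in>orbit_poset G (Bp G p). Ob \<subseteq> UNIV" by simp
  have ChHf: "\<forall>c\<in>?Ch. Hf c \<in> ?Ch"
    using N_Bp Bp_above unfolding Hf_def chains_poset_def by auto
  have IdCh: "\<forall>c\<in>?Ch. (\<lambda>c. c) c \<in> ?Ch" by simp
  have CCh: "\<forall>c\<in>?Ch. (\<lambda>c. {N}) c \<in> ?Ch" using N_Bp unfolding chains_poset_def by auto
  have Heq: "\<forall>g\<in>carrier G. \<forall>c\<in>?Ch. Hf (chain_action G g c) = chain_action G g (Hf c)"
    using conj_N unfolding Hf_def by (simp add: chain_action_image image_Un)
  have Ieq: "\<forall>g\<in>carrier G. \<forall>c\<in>?Ch. (\<lambda>c. c) (chain_action G g c) = chain_action G g ((\<lambda>c. c) c)"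
    by simp
  have Ceq: "\<forall>g\<in>carrier G. \<forall>c\<in>?Ch. (\<lambda>c. {N}) (chain_action G g c) = chain_action G g ((\<lambda>c. {N}) c)"
    using conj_N by (simp add: chain_action_image)
  have h1: "homotopic_with (\<lambda>_. True) ?T ?T (\<lambda>Ob. (\<lambda>c. c) ` Ob) (\<lambda>Ob. Hf ` Ob)"
    by (rule orbit_homotopic[OF grp D IdCh ChHf Ieq Heq]) (auto simp: Hf_def)
  have h1': "homotopic_with (\<lambda>_. True) ?T ?T id (\<lambda>Ob. Hf ` Ob)"
    by (rule homotopic_with_eq[OF h1]) auto
  have h3: "homotopic_with (\<lambda>_. True) ?T ?T (\<lambda>Ob. (\<lambda>c. {N}) ` Ob) (\<lambda>Ob. Hf ` Ob)"
    by (rule orbit_homotopic[OF grp D CCh ChHf Ceq Heq]) (auto simp: Hf_def)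
  have h3': "homotopic_with (\<lambda>_. True) ?T ?T (\<lambda>Ob. {{N}}) (\<lambda>Ob. Hf ` Ob)"
    by (rule homotopic_with_eq[OF h3]) (auto simp: topspace_poset dest: orbit_nonempty[OF grp])
  have "homotopic_with (\<lambda>_. True) ?T ?T id (\<lambda>Ob. {{N}})"
    using homotopic_with_trans[OF h1' homotopic_with_symD[OF h3']] .
  then show ?thesis unfolding contractible_space_def by blast
qed

end


theorem proposition5p4:
  fixes G :: "('a, 'b) monoid_scheme" and p :: nat
  assumes "group G" and "finite (carrier G)" and "prime p" and "p dvd order G"
    and "Op G p \<noteq> {\<one>\<^bsub>G\<^esub>}"
  shows "contractible_space (poset_topology (orbit_poset G (Sp G p)) orbit_le)
       \<and> contractible_space (poset_topology (orbit_poset G (Bp G p)) orbit_le)"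
  using Sp_contractible[OF assms(1,2,3) refl assms(5)] Bp_contractible[OF assms(1,2,3) refl assms(5)] by simp

end
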